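(* Let $r$ and $k$ be odd positive integers such that $2^{\alpha}k\in G_r$ for all nonnegative integers $\alpha$, and let $k_1,k_2$ be relatively prime positive integers with $k_1k_2=k$. Then either $2^{\alpha}k_1\in G_r$ for all nonnegative integers $\alpha$, or $2^{\alpha}k_2\in G_r$ for all nonnegative integers $\alpha$.
   Context: For a positive integer $r$, the $r$-th Schemmel totient function $S_r:\mathbb{N}\to\mathbb{N}_0$ is the multiplicative arithmetic function (so $S_r(1)=1$ and $S_r(ab)=S_r(a)S_r(b)$ for coprime $a,b$) defined on prime powers by $S_r(p^{\alpha})=0$ if $p\le r$ and $S_r(p^\alpha)=p^{\alpha-1}(p-r)$ if $p>r$, for all primes $p$ and positive integers $\alpha$. $G_r$ denotes the set of positive integers not in the range of $S_r$. *)

theory Defs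
  imports "HOL-Computational_Algebra.Primes"
begin

(* r-th Schemmel totient: multiplicative, S_r(p^a) = 0 if p <= r, p^(a-1)(p-r) if p > r.
   Only meaningful on positive integers; value at 0 is irrelevant. *)
definition schemmel :: "nat \<Rightarrow> nat \<Rightarrow> nat" where
  "schemmel r n = (\<Prod>p\<in>prime_factors n.
      (if p \<le> r then 0 else p ^ (multiplicity p n - 1) * (p - r)))"

definition G :: "nat \<Rightarrow> nat set" where
  "G r = {m. m > 0 \<and> \<not> (\<exists>n>0. schemmel r n = m)}"

end

theory Submission
  imports Defs
begin

lemma S_one: "schemmel r 1 = 1"
  by (simp add: schemmel_def)

lemma S_mult:
  assumes "coprime a b" "a > 0" "b > 0"
  shows "schemmel r (a*b) = schemmel r a * schemmel r b"
proof -
  have U: "prime_factors (a*b) = prime_factors a \<union> prime_factors b"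
    using assms by (simp add: prime_factors_product)
  have D: "prime_factors a \<inter> prime_factors b = {}"
  proof (rule ccontr)
    assume "prime_factors a \<inter> prime_factors b \<noteq> {}"
    then obtain p where "p \<in> prime_factors a" "p \<in> prime_factors b" by blast
    then have "prime p" "p dvd a" "p dvd b" by auto
    with assms(1) show False
      by (metis coprime_common_divisor not_prime_unit)
  qed
  define f where "f = (\<lambda>n p. (if p \<le> r then 0 else p ^ (multiplicity p n - 1) * (p - r)))"
  have "schemmel r (a*b) = (\<Prod>p\<in>prime_factors a \<union> prime_factors b. f (a*b) p)"
    unfolding schemmel_def f_def U ..
  also have "\<dots> = (\<Prod>p\<in>prime_factors a. f (a*b) p) * (\<Prod>p\<in>prime_factors b. f (a*b) p)"
    by (rule prod.union_disjoint) (use D in auto)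
  also have "(\<Prod>p\<in>prime_factors a. f (a*b) p) = (\<Prod>p\<in>prime_factors a. f a p)"
  proof (rule prod.cong[OF refl])
    fix p assume p: "p \<in> prime_factors a"
    then have "p \<notin> prime_factors b" using D by blast
    then have "multiplicity p b = 0" using p assms
      by (metis in_prime_factors_iff gr0I less_not_refl2 prime_multiplicity_gt_zero_iff prime_imp_prime_elem)
    then have "multiplicity p (a*b) = multiplicity p a"
      using p assms by (subst prime_elem_multiplicity_mult_distrib) (auto intro: prime_imp_prime_elem)
    then show "f (a*b) p = f a p" by (simp add: f_def)
  qed
  also have "(\<Prod>p\<in>prime_factors b. f (a*b) p) = (\<Prod>p\<in>prime_factors b. f b p)"
  proof (rule prod.cong[OF refl])
    fix p assume p: "p \<in> prime_factors b"
    then have "p \<notin> prime_factors a" using D by blast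
    then have "multiplicity p a = 0" using p assms
      by (metis in_prime_factors_iff gr0I less_not_refl2 prime_multiplicity_gt_zero_iff prime_imp_prime_elem)
    then have "multiplicity p (a*b) = multiplicity p b"
      using p assms by (subst prime_elem_multiplicity_mult_distrib) (auto intro: prime_imp_prime_elem)
    then show "f (a*b) p = f b p" by (simp add: f_def)
  qed
  finally show ?thesis unfolding schemmel_def f_def .
qed

lemma S_pp:
  assumes "prime p" "e > 0"
  shows "schemmel r (p^e) = (if p \<le> r then 0 else p^(e-1) * (p - r))"
proof -
  have "prime_factors (p^e) = {p}"
    using assms by (simp add: prime_factorization_prime_power)
  then show ?thesis using assms by (simp add: schemmel_def)
qed

lemma odd_dvd_cancel:
  fixes q k :: nat
  assumes "odd q" "q dvd 2^a * k"
  shows "q dvd k"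
proof -
  have "coprime q (2^a)" using assms(1) by simp
  then show ?thesis using assms(2) by (simp add: coprime_dvd_mult_right_iff)
qed

lemma S_split:
  fixes n p :: nat
  assumes "prime p" "p dvd n" "n > 0"
  obtains e m where "e > 0" "n = p^e * m" "m > 0" "m < n" "coprime (p^e) m"
    "schemmel r n = schemmel r (p^e) * schemmel r m"
proof -
  define e where "e = multiplicity p n"
  obtain m where m: "n = p ^ e * m" "\<not> p dvd m"
  proof -
    have h1: "n \<noteq> 0" and h2: "\<not> is_unit p" using assms by auto
    show ?thesis using multiplicity_decompose'[where x=n and p=p, OF h1 h2] that unfolding e_def by metis
  qed
  have e: "e > 0" unfolding e_def using assms
    by (simp add: prime_multiplicity_gt_zero_iff prime_imp_prime_elem)
  have mpos: "m > 0" using m(1) assms(3) by (cases "m = 0") auto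
  have cop: "coprime (p^e) m" using m(2) assms(1)
    by (simp add: prime_imp_coprime)
  have pe: "p^e > 1" using one_less_power[OF prime_gt_1_nat[OF assms(1)] e] .
  have lt: "m < n"
  proof -
    have "1 * m < p^e * m" using pe mpos by (rule mult_strict_right_mono)
    then show ?thesis using m(1) by simp
  qed
  have pe0: "p^e > 0" using pe by linarith
  have eq: "schemmel r n = schemmel r (p^e) * schemmel r m"
    using S_mult[OF cop pe0 mpos] m(1) by simp
  show ?thesis by (rule that[OF e m(1) mpos lt cop eq])
qed

lemma pp_pow2:
  fixes p r e1 e2 a1 a2 k1 k2 :: nat
  assumes "prime p" "e1 > 0" "e2 > 0" "odd k1" "odd k2" "coprime k1 k2"
    "p > r" "r > 0" "odd r"
    "p^(e1-1)*(p-r) dvd 2^a1 * k1" "p^(e2-1)*(p-r) dvd 2^a2 * k2"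
  shows "(\<exists>t. p^(e1-1)*(p-r) = 2^t) \<or> (\<exists>t. p^(e2-1)*(p-r) = 2^t)"
proof -
  obtain q where uq0: "p - r = 2^multiplicity 2 (p-r) * q" "\<not> 2 dvd q"
  proof -
    have h1: "p - r \<noteq> 0" using assms(7) by simp
    have h2: "\<not> is_unit (2::nat)" by simp
    show ?thesis using multiplicity_decompose'[where x="p-r" and p=2, OF h1 h2] that by metis
  qed
  define u where "u = multiplicity 2 (p-r)"
  have uq: "p - r = 2^u * q" "\<not> 2 dvd q" using uq0 unfolding u_def by auto
  have "q dvd p^(e1-1)*(p-r)" unfolding uq(1) by simp
  then have "q dvd 2^a1 * k1" using assms(10) by (rule dvd_trans)
  then have q1: "q dvd k1" by (rule odd_dvd_cancel[OF uq(2)])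
  have "q dvd p^(e2-1)*(p-r)" unfolding uq(1) by simp
  then have "q dvd 2^a2 * k2" using assms(11) by (rule dvd_trans)
  then have q2: "q dvd k2" by (rule odd_dvd_cancel[OF uq(2)])
  have "is_unit q" using coprime_common_divisor[OF assms(6) q1 q2] .
  then have "q = 1" by simp
  show ?thesis
  proof (cases "p = 2")
    case True
    then have "r = 1" using assms(7,8) by simp
    then have "p^(e1-1)*(p-r) = 2^(e1-1)" using True by simp
    then show ?thesis by blast
  next
    case False
    then have "p > 2" using prime_ge_2_nat[OF assms(1)] by linarith
    then have podd: "odd p" using prime_odd_nat[OF assms(1)] by blast
    show ?thesis
    proof (rule ccontr)
      assume nt: "\<not> ?thesis"
      have pr: "p - r = 2^u" using uq(1) unfolding `q=1` by simp
      have "e1 \<noteq> 1"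
      proof
        assume "e1 = 1" then have "p^(e1-1)*(p-r) = 2^u" using pr by simp
        then show False using nt by blast
      qed
      have "e2 \<noteq> 1"
      proof
        assume "e2 = 1" then have "p^(e2-1)*(p-r) = 2^u" using pr by simp
        then show False using nt by blast
      qed
      have "e1 - 1 > 0" "e2 - 1 > 0" using assms(2,3) `e1 \<noteq> 1` `e2 \<noteq> 1` by auto
      then have "p dvd p^(e1-1)" "p dvd p^(e2-1)"
        using dvd_power[of "e1-1" p] dvd_power[of "e2-1" p] by auto
      then have "p dvd p^(e1-1)*(p-r)" "p dvd p^(e2-1)*(p-r)" by simp_all
      then have h1: "p dvd 2^a1 * k1" and h2: "p dvd 2^a2 * k2"
        using dvd_trans[OF _ assms(10)] dvd_trans[OF _ assms(11)] by auto
      have "p dvd k1" using odd_dvd_cancel[OF podd h1] .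
      moreover have "p dvd k2" using odd_dvd_cancel[OF podd h2] .
      ultimately have "is_unit p" using coprime_common_divisor[OF assms(6)] by blast
      then show False using assms(1) by simp
    qed
  qed
qed

lemma pow2_cancel:
  fixes x k :: nat
  assumes "2^t * x = 2^a * k" "odd k"
  shows "t \<le> a \<and> x = 2^(a-t) * k"
proof -
  have "t \<le> a"
  proof (rule ccontr)
    assume "\<not> t \<le> a"
    then have "t = a + (t - a)" "t - a > 0" by auto
    then have "2^a * (2^(t-a) * x) = 2^a * k" using assms(1)
      by (metis mult.assoc power_add)
    then have "2^(t-a) * x = k" by simp
    then have "2 dvd k" using `t - a > 0`
      by (metis dvd_mult2 dvd_power gr0_implies_Suc zero_less_Suc)
    then show False using assms(2) by simp
  qed
  moreover have "2^t * x = 2^t * (2^(a-t) * k)"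
    using assms(1) `t \<le> a` by (metis le_add_diff_inverse mult.assoc power_add)
  ultimately show ?thesis by simp
qed

lemma common_prime:
  fixes a b :: nat
  assumes "\<not> coprime a b"
  obtains p where "prime p" "p dvd a" "p dvd b"
proof -
  have "gcd a b \<noteq> 1" using assms by (simp add: coprime_iff_gcd_eq_1)
  then obtain p where "prime p" "p dvd gcd a b" using prime_factor_nat by blast
  then show ?thesis using that by simp
qed

lemma combine:
  fixes r k1 k2 :: nat
  assumes "odd r" "r > 0" "odd k1" "odd k2" "coprime k1 k2"
  shows "n1 > 0 \<Longrightarrow> n2 > 0 \<Longrightarrow> schemmel r n1 = 2^a1*k1 \<Longrightarrow> schemmel r n2 = 2^a2*k2
         \<Longrightarrow> \<exists>n a. n > 0 \<and> schemmel r n = 2^a*(k1*k2)"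
proof (induction "n1+n2" arbitrary: n1 n2 a1 a2 rule: less_induct)
  case less
  show ?case
  proof (cases "coprime n1 n2")
    case True
    have "schemmel r (n1*n2) = 2^(a1+a2)*(k1*k2)"
      using S_mult[OF True less.prems(1,2)] less.prems(3,4) by (simp add: power_add algebra_simps)
    moreover have "n1*n2 > 0" using less.prems(1,2) by simp
    ultimately show ?thesis by blast
  next
    case False
    then obtain p where p: "prime p" "p dvd n1" "p dvd n2" by (rule common_prime)
    obtain e1 m1 where s1: "e1 > 0" "n1 = p^e1 * m1" "m1 > 0" "m1 < n1"
      "schemmel r n1 = schemmel r (p^e1) * schemmel r m1"
      using S_split[OF p(1) p(2) less.prems(1), of r] by blast
    obtain e2 m2 where s2: "e2 > 0" "n2 = p^e2 * m2" "m2 > 0" "m2 < n2"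
      "schemmel r n2 = schemmel r (p^e2) * schemmel r m2"
      using S_split[OF p(1) p(3) less.prems(2), of r] by blast
    have k1: "k1 > 0" using assms(3) by (cases k1) auto
    have "schemmel r n1 \<noteq> 0" using less.prems(3) k1 by simp
    then have "schemmel r (p^e1) \<noteq> 0" unfolding s1(5) by simp
    then have pr: "p > r" using S_pp[OF p(1) s1(1), of r] by (auto split: if_splits)
    have v1: "schemmel r (p^e1) = p^(e1-1)*(p-r)" using S_pp[OF p(1) s1(1), of r] pr by simp
    have v2: "schemmel r (p^e2) = p^(e2-1)*(p-r)" using S_pp[OF p(1) s2(1), of r] pr by simp
    have d1: "p^(e1-1)*(p-r) dvd 2^a1*k1" using s1(5) less.prems(3) v1 by (metis dvd_triv_left)
    have d2: "p^(e2-1)*(p-r) dvd 2^a2*k2" using s2(5) less.prems(4) v2 by (metis dvd_triv_left)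
    from pp_pow2[OF p(1) s1(1) s2(1) assms(3,4,5) pr assms(2,1) d1 d2]
    show ?thesis
    proof
      assume "\<exists>t. p^(e1-1)*(p-r) = 2^t"
      then obtain t where t: "schemmel r (p^e1) = 2^t" using v1 by auto
      have "2^t * schemmel r m1 = 2^a1 * k1" using s1(5) less.prems(3) t by simp
      then have m1: "schemmel r m1 = 2^(a1-t)*k1" using pow2_cancel assms(3) by blast
      have "m1 + n2 < n1 + n2" using s1(4) by simp
      then show ?thesis using less.hyps[OF _ s1(3) less.prems(2) m1 less.prems(4)] by blast
    next
      assume "\<exists>t. p^(e2-1)*(p-r) = 2^t"
      then obtain t where t: "schemmel r (p^e2) = 2^t" using v2 by auto
      have "2^t * schemmel r m2 = 2^a2 * k2" using s2(5) less.prems(4) t by simp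
      then have m2: "schemmel r m2 = 2^(a2-t)*k2" using pow2_cancel assms(4) by blast
      have "n1 + m2 < n1 + n2" using s2(4) by simp
      then show ?thesis using less.hyps[OF _ less.prems(1) s2(3) less.prems(3) m2] by blast
    qed
  qed
qed

theorem theorem3p4:
  fixes r k k1 k2 :: nat
  assumes "r > 0" and "odd r" and "k > 0" and "odd k"
    and "\<forall>\<alpha>::nat. 2 ^ \<alpha> * k \<in> G r"
    and "k1 > 0" and "k2 > 0" and "coprime k1 k2" and "k1 * k2 = k"
  shows "(\<forall>\<alpha>::nat. 2 ^ \<alpha> * k1 \<in> G r) \<or> (\<forall>\<alpha>::nat. 2 ^ \<alpha> * k2 \<in> G r)"
proof (rule ccontr)
  assume "\<not> ?thesis"
  then obtain a1 a2 where "2^a1 * k1 \<notin> G r" "2^a2 * k2 \<notin> G r" by blast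
  then obtain n1 n2 where n1: "n1 > 0" "schemmel r n1 = 2^a1*k1"
    and n2: "n2 > 0" "schemmel r n2 = 2^a2*k2"
    using assms(6,7) unfolding G_def by auto
  have ok1: "odd k1" "odd k2" using assms(4,9) by auto
  obtain n a where "n > 0" "schemmel r n = 2^a * k"
    using combine[OF assms(2,1) ok1 assms(8) n1(1) n2(1) n1(2) n2(2)] assms(9) by blast
  then have "2^a * k \<notin> G r" unfolding G_def by auto
  then show False using assms(5) by blast
qed

end
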